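(* Let $g(x,\omega)=c_1\chi\omega(1-\omega)(\bar r\,\bar\tau(x))^2+c_2(1-\omega)\bar r\,\bar\tau(x)+\bar r\alpha$, and define $R_\tau(\omega,x)=(1-2\omega)\bar r\,\bar\tau(x)$, $R_c=\dfrac{c_2}{c_1\chi}$, $\omega_i=\dfrac12-\dfrac{c_2(\tau_D-\tau_C)}{2c_1\lambda_0\tau_i\chi}$ for $i\in\{C,D\}$, and $\tilde x(\omega)=\dfrac{\tau_D}{\tau_D-\tau_C}-\dfrac{c_2}{c_1\lambda_0\chi(1-2\omega)}$. Then: (a) if $R_\tau(0,0)<R_c$, then $\partial g/\partial\omega<0$ for all $x\in(0,1)$ and all $\omega\in(0,1)$; (b) if $R_\tau(0,1)<R_c<R_\tau(0,0)$, then (1) for $\omega\in(0,\omega_D)$: $\partial g/\partial\omega>0$ for $x\in(0,\tilde x(\omega))$ and $\partial g/\partial\omega<0$ for $x\in(\tilde x(\omega),1)$; (2) for $\omega\in(\omega_D,1)$: $\partial g/\partial\omega<0$ for all $x\in(0,1)$; (c) if $R_\tau(0,1)>R_c$, then (1) for $\omega\in(0,\omega_C)$: $\partial g/\partial\omega>0$ for all $x\in(0,1)$; (2) for $\omega\in(\omega_C,\omega_D)$: $\partial g/\partial\omega>0$ for $x\in(0,\tilde x(\omega))$ and $\partial g/\partial\omega<0$ for $x\in(\tilde x(\omega),1)$; (3) for $\omega\in(\omega_D,1)$: $\partial g/\partial\omega<0$ for all $x\in(0,1)$.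
   Context: Parameters: $\lambda_0>0$, $\tau_D>\tau_C\ge 0$, $\alpha\in[0,1]$, $\sigma\in[0,1)$, $\gamma\in[0,1)$, $d>0$, $c_1>0$, $c_2\ge 0$. $\bar\tau(x)=\tau_Cx+\tau_D(1-x)$, $\bar r=\lambda_0/(\tau_D-\tau_C)$, $\chi=(d/(1-\sigma))^{1/(1-\gamma)}$. *)

theory Defs
  imports "HOL-Analysis.Analysis"
begin

definition tau_bar :: "real \<Rightarrow> real \<Rightarrow> real \<Rightarrow> real" where
  "tau_bar tC tD x = tC * x + tD * (1 - x)"

definition r_bar :: "real \<Rightarrow> real \<Rightarrow> real \<Rightarrow> real" where
  "r_bar l0 tC tD = l0 / (tD - tC)"

definition chi :: "real \<Rightarrow> real \<Rightarrow> real \<Rightarrow> real" where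
  "chi d sig gam = (d / (1 - sig)) powr (1 / (1 - gam))"

definition gfun :: "real \<Rightarrow> real \<Rightarrow> real \<Rightarrow> real \<Rightarrow> real \<Rightarrow> real \<Rightarrow> real \<Rightarrow> real \<Rightarrow> real \<Rightarrow> real" where
  "gfun l0 tC tD al c1 c2 ch x w =
     c1 * ch * w * (1 - w) * (r_bar l0 tC tD * tau_bar tC tD x)^2
     + c2 * (1 - w) * r_bar l0 tC tD * tau_bar tC tD x + r_bar l0 tC tD * al"

definition R_tau :: "real \<Rightarrow> real \<Rightarrow> real \<Rightarrow> real \<Rightarrow> real \<Rightarrow> real" where
  "R_tau l0 tC tD w x = (1 - 2 * w) * r_bar l0 tC tD * tau_bar tC tD x"

definition R_c :: "real \<Rightarrow> real \<Rightarrow> real \<Rightarrow> real" where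
  "R_c c1 c2 ch = c2 / (c1 * ch)"

definition omega_i :: "real \<Rightarrow> real \<Rightarrow> real \<Rightarrow> real \<Rightarrow> real \<Rightarrow> real \<Rightarrow> real \<Rightarrow> real" where
  "omega_i l0 tC tD c1 c2 ch ti = 1/2 - c2 * (tD - tC) / (2 * c1 * l0 * ti * ch)"

definition x_tilde :: "real \<Rightarrow> real \<Rightarrow> real \<Rightarrow> real \<Rightarrow> real \<Rightarrow> real \<Rightarrow> real \<Rightarrow> real" where
  "x_tilde l0 tC tD c1 c2 ch w = tD / (tD - tC) - c2 / (c1 * l0 * ch * (1 - 2 * w))"

end

theory Submission
  imports Defs
begin

lemma deriv_g:
  "deriv (\<lambda>v. gfun l0 tC tD al c1 c2 ch x v) w =
    (r_bar l0 tC tD * tau_bar tC tD x) * (c1*ch*(1-2*w)*(r_bar l0 tC tD * tau_bar tC tD x) - c2)"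
proof -
  define K where "K = r_bar l0 tC tD * tau_bar tC tD x"
  have e: "(\<lambda>v. gfun l0 tC tD al c1 c2 ch x v) = (\<lambda>v. c1*ch*K^2*(v - v * v) + c2*K*(1-v) + r_bar l0 tC tD * al)"
    by (rule ext) (simp add: gfun_def K_def power_mult_distrib algebra_simps)
  have "((\<lambda>v. c1*ch*K^2*(v - v * v) + c2*K*(1-v) + r_bar l0 tC tD * al) has_real_derivative
        c1*ch*K^2*(1 - (1*w + w*1)) + c2*K*(0-1) + 0) (at w)"
    by (intro derivative_eq_intros) auto
  then have "deriv (\<lambda>v. gfun l0 tC tD al c1 c2 ch x v) w = c1*ch*K^2*(1 - (1*w + w*1)) + c2*K*(0-1) + 0"
    unfolding e by (rule DERIV_imp_deriv)
  then show ?thesis by (simp add: K_def[symmetric] power2_eq_square algebra_simps)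
qed

lemma pos_lem:
  fixes kk ss pp cc :: real
  assumes "kk > 0" "pp > 0" "ss * kk > cc/pp" shows "kk*(pp * ss * kk - cc) > 0"
proof -
  have "pp*(ss * kk) > cc" using assms by (simp add: field_simps)
  then show ?thesis using assms by (simp add: algebra_simps)
qed

lemma neg_lem:
  fixes kk ss pp cc :: real
  assumes "kk > 0" "pp > 0" "ss * kk < cc/pp" shows "kk*(pp * ss * kk - cc) < 0"
proof -
  have "pp*(ss * kk) < cc" using assms by (simp add: field_simps)
  then show ?thesis using assms by (simp add: mult_pos_neg algebra_simps)
qed

lemma xt_lem:
  fixes D L tD Rc x :: real
  assumes "D > 0" "L > 0"
  shows "(x < tD/D - Rc/L) \<longleftrightarrow> (Rc < L*(tD - D*x)/D)"
    and "(x > tD/D - Rc/L) \<longleftrightarrow> (Rc > L*(tD - D*x)/D)"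
proof -
  have e: "tD/D - Rc/L = (tD*L - Rc*D)/(D*L)" using assms by (simp add: field_simps)
  have dl: "D*L > 0" using assms by simp
  have "(x < tD/D - Rc/L) \<longleftrightarrow> x*(D*L) < tD*L - Rc*D" unfolding e using dl by (simp add: pos_less_divide_eq)
  also have "\<dots> \<longleftrightarrow> Rc*D < L*(tD - D*x)" by (simp add: algebra_simps)
  also have "\<dots> \<longleftrightarrow> Rc < L*(tD - D*x)/D" using assms(1) by (simp add: pos_less_divide_eq)
  finally show "(x < tD/D - Rc/L) \<longleftrightarrow> (Rc < L*(tD - D*x)/D)" .
  have "(x > tD/D - Rc/L) \<longleftrightarrow> x*(D*L) > tD*L - Rc*D" unfolding e using dl by (simp add: pos_divide_less_eq)
  also have "\<dots> \<longleftrightarrow> Rc*D > L*(tD - D*x)" by (simp add: algebra_simps)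
  also have "\<dots> \<longleftrightarrow> Rc > L*(tD - D*x)/D" using assms(1) by (simp add: pos_divide_less_eq)
  finally show "(x > tD/D - Rc/L) \<longleftrightarrow> (Rc > L*(tD - D*x)/D)" .
qed

theorem proposition4:
  fixes l0 tC tD al sig gam d c1 c2 :: real
  assumes "l0 > 0" and "tD > tC" and "tC \<ge> 0"
    and "0 \<le> al" and "al \<le> 1"
    and "0 \<le> sig" and "sig < 1"
    and "0 \<le> gam" and "gam < 1"
    and "d > 0" and "c1 > 0" and "c2 \<ge> 0"
  defines "ch \<equiv> chi d sig gam"
  defines "g \<equiv> gfun l0 tC tD al c1 c2 ch"
  defines "Rc \<equiv> R_c c1 c2 ch"
  defines "wC \<equiv> omega_i l0 tC tD c1 c2 ch tC"
  defines "wD \<equiv> omega_i l0 tC tD c1 c2 ch tD"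
  defines "xt \<equiv> x_tilde l0 tC tD c1 c2 ch"
  shows
   "(R_tau l0 tC tD 0 0 < Rc \<longrightarrow>
       (\<forall>x\<in>{0<..<1}. \<forall>w\<in>{0<..<1}. deriv (\<lambda>v. g x v) w < 0))
    \<and>
    (R_tau l0 tC tD 0 1 < Rc \<and> Rc < R_tau l0 tC tD 0 0 \<longrightarrow>
       (\<forall>w\<in>{0<..<wD}.
          (\<forall>x\<in>{0<..<xt w}. deriv (\<lambda>v. g x v) w > 0) \<and>
          (\<forall>x\<in>{xt w<..<1}. deriv (\<lambda>v. g x v) w < 0)) \<and>
       (\<forall>w\<in>{wD<..<1}. \<forall>x\<in>{0<..<1}. deriv (\<lambda>v. g x v) w < 0))
    \<and>
    (R_tau l0 tC tD 0 1 > Rc \<longrightarrow>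
       (\<forall>w\<in>{0<..<wC}. \<forall>x\<in>{0<..<1}. deriv (\<lambda>v. g x v) w > 0) \<and>
       (\<forall>w\<in>{wC<..<wD}.
          (\<forall>x\<in>{0<..<xt w}. deriv (\<lambda>v. g x v) w > 0) \<and>
          (\<forall>x\<in>{xt w<..<1}. deriv (\<lambda>v. g x v) w < 0)) \<and>
       (\<forall>w\<in>{wD<..<1}. \<forall>x\<in>{0<..<1}. deriv (\<lambda>v. g x v) w < 0))"
proof -
  define r where "r = r_bar l0 tC tD"
  define T where "T = tau_bar tC tD"
  define P where "P = c1 * ch"
  have r0: "r > 0" using assms(1,2) by (simp add: r_bar_def r_def)
  have ch0: "ch > 0" using assms(7,10) by (simp add: ch_def chi_def)
  have P0: "P > 0" using ch0 assms(11) by (simp add: P_def)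
  have Rc: "Rc = c2 / P" by (simp add: Rc_def R_c_def P_def)
  have Rc0: "Rc \<ge> 0" using Rc P0 assms(12) by simp
  have D: "deriv (\<lambda>v. g x v) w = (r * T x) * (P*(1-2*w)*(r*T x) - c2)" for x w
    unfolding g_def using deriv_g[of l0 tC tD al c1 c2 ch x w] by (simp add: r_def T_def P_def)
  have Dpos: "deriv (\<lambda>v. g x v) w > 0" if "r*T x > 0" "(1-2*w)*(r*T x) > Rc" for x w
    unfolding D using pos_lem[where kk="r*T x" and ss="1-2*w" and pp=P and cc=c2] that P0 Rc by simp
  have Dneg: "deriv (\<lambda>v. g x v) w < 0" if "r*T x > 0" "(1-2*w)*(r*T x) < Rc" for x w
    unfolding D using neg_lem[where kk="r*T x" and ss="1-2*w" and pp=P and cc=c2] that P0 Rc by simp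
  have T01: "T x > tC" "T x < tD" if "x \<in> {0<..<1}" for x
  proof -
    have a: "(tD - tC)*(1-x) > 0" "(tD - tC)*x > 0" using that assms(2) by auto
    show "T x > tC" "T x < tD" using a by (auto simp: T_def tau_bar_def algebra_simps)
  qed
  have rT01: "r*T x > r*tC" "r*T x < r*tD" if "x \<in> {0<..<1}" for x
    using T01[OF that] r0 by auto
  have rTpos': "r*T x > 0" if "x < 1" for x
  proof -
    have a: "(tD-tC)*(1-x) > 0" using that assms(2) by simp
    have "T x = tC + (tD-tC)*(1-x)" by (simp add: T_def tau_bar_def algebra_simps)
    then have "T x > 0" using a assms(3) by simp
    then show ?thesis using r0 by simp
  qed
  have rTpos: "r*T x > 0" if "x \<in> {0<..<1}" for x using rTpos' that by simp
  have R00: "R_tau l0 tC tD 0 0 = r*tD" and R01: "R_tau l0 tC tD 0 1 = r*tC"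
    by (simp_all add: R_tau_def r_def tau_bar_def)
  have tD0: "tD > 0" using assms(2,3) by simp
  have wD: "1 - 2*wD = Rc/(r*tD)"
    using assms(1,2,3,11) P0 ch0 tD0 unfolding wD_def omega_i_def Rc r_def r_bar_def P_def
    by (simp add: field_simps)
  have wC: "1 - 2*wC = Rc/(r*tC)" if "tC > 0"
    using assms(1,2,3,11) P0 ch0 that unfolding wC_def omega_i_def Rc r_def r_bar_def P_def
    by (simp add: field_simps)
  have xt: "x < xt w \<longleftrightarrow> (1-2*w)*(r*T x) > Rc" if "1-2*w > 0" for x w
  proof -
    have "xt w = tD/(tD-tC) - Rc/(l0*(1-2*w))"
      unfolding xt_def x_tilde_def Rc P_def by (simp add: mult.commute mult.left_commute)
    moreover have "(1-2*w)*(r*T x) = (1-2*w)*l0*(tD - (tD-tC)*x)/(tD-tC)"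
    proof -
      have "T x = tD - (tD-tC)*x" by (simp add: T_def tau_bar_def algebra_simps)
      then show ?thesis by (simp add: r_def r_bar_def)
    qed
    moreover have "x < tD/(tD-tC) - Rc/(l0*(1-2*w)) \<longleftrightarrow> Rc < (1-2*w)*l0*(tD - (tD-tC)*x)/(tD-tC)"
      using xt_lem(1)[of "tD-tC" "l0*(1-2*w)" x tD Rc] that assms(1,2) by (simp add: mult.commute)
    ultimately show ?thesis by simp
  qed
  have xt': "x > xt w \<longleftrightarrow> (1-2*w)*(r*T x) < Rc" if "1-2*w > 0" for x w
  proof -
    have "xt w = tD/(tD-tC) - Rc/(l0*(1-2*w))"
      unfolding xt_def x_tilde_def Rc P_def by (simp add: mult.commute mult.left_commute)
    moreover have "(1-2*w)*(r*T x) = (1-2*w)*l0*(tD - (tD-tC)*x)/(tD-tC)"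
    proof -
      have "T x = tD - (tD-tC)*x" by (simp add: T_def tau_bar_def algebra_simps)
      then show ?thesis by (simp add: r_def r_bar_def)
    qed
    moreover have "x > tD/(tD-tC) - Rc/(l0*(1-2*w)) \<longleftrightarrow> Rc > (1-2*w)*l0*(tD - (tD-tC)*x)/(tD-tC)"
      using xt_lem(2)[of "tD-tC" "l0*(1-2*w)" tD Rc x] that assms(1,2) by (simp add: mult.commute)
    ultimately show ?thesis by simp
  qed
  have wDhalf: "wD \<le> 1/2"
  proof -
    have "Rc/(r*tD) \<ge> 0" using Rc0 r0 tD0 by simp
    then show ?thesis using wD by linarith
  qed
  have aboveD: "deriv (\<lambda>v. g x v) w < 0" if "w > wD" "x \<in> {0<..<1}" "Rc > 0 \<or> w > 1/2" for x w
  proof (rule Dneg[OF rTpos[OF that(2)]])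
    show "(1-2*w)*(r*T x) < Rc"
    proof (cases "1-2*w > 0")
      case True
      have "1-2*w < Rc/(r*tD)" using wD that(1) by simp
      then have "(1-2*w)*(r*tD) < Rc" using r0 tD0 by (simp add: field_simps)
      moreover have "(1-2*w)*(r*T x) < (1-2*w)*(r*tD)" using True rT01[OF that(2)] by simp
      ultimately show ?thesis by simp
    next
      case False
      then have "(1-2*w)*(r*T x) \<le> 0" using rTpos[OF that(2)] by (simp add: mult_nonpos_nonneg)
      moreover have "(1-2*w)*(r*T x) < 0 \<or> Rc > 0" using that(3) rTpos[OF that(2)]
        by (auto simp: mult_neg_pos)
      ultimately show ?thesis using Rc0 by linarith
    qed
  qed
  have midD: "(\<forall>x\<in>{0<..<xt w}. deriv (\<lambda>v. g x v) w > 0) \<and>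
          (\<forall>x\<in>{xt w<..<1}. deriv (\<lambda>v. g x v) w < 0)" if "w < wD" for w
  proof -
    have s: "1-2*w > 0" using that wDhalf by simp
    show ?thesis
    proof (intro conjI ballI)
      fix x assume x: "x \<in> {0<..<xt w}"
      then have h: "(1-2*w)*(r*T x) > Rc" using xt[OF s] by simp
      then have "r*T x > 0" using Rc0 s zero_less_mult_pos[of "1-2*w" "r*T x"] by linarith
      then show "deriv (\<lambda>v. g x v) w > 0" using Dpos h by simp
    next
      fix x assume x: "x \<in> {xt w<..<1}"
      then have h: "(1-2*w)*(r*T x) < Rc" using xt'[OF s] by simp
      show "deriv (\<lambda>v. g x v) w < 0" using Dneg h rTpos' x by simp
    qed
  qed
  have partA: "\<forall>x\<in>{0<..<1}. \<forall>w\<in>{0<..<1}. deriv (\<lambda>v. g x v) w < 0"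
    if "r*tD < Rc"
  proof (intro ballI)
    fix x w :: real assume x: "x \<in> {0<..<1}" and w: "w \<in> {0<..<1}"
    have "w*(r*T x) > 0" using w rTpos[OF x] by simp
    then have "(1-2*w)*(r*T x) < r*T x" by (simp add: algebra_simps)
    then show "deriv (\<lambda>v. g x v) w < 0" using Dneg[OF rTpos[OF x]] rT01[OF x] that by simp
  qed
  have belowC: "deriv (\<lambda>v. g x v) w > 0" if "tC > 0" "w < wC" "x \<in> {0<..<1}" "Rc < r*tC" for x w
  proof (rule Dpos[OF rTpos[OF that(3)]])
    have "1-2*w > Rc/(r*tC)" using wC[OF that(1)] that(2) by simp
    then have a: "(1-2*w)*(r*tC) > Rc" using r0 that(1) by (simp add: field_simps)
    have "1-2*w > 0" using a Rc0 r0 that(1) zero_less_mult_pos2[of "1-2*w" "r*tC"] by simp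
    then have "(1-2*w)*(r*T x) > (1-2*w)*(r*tC)" using rT01[OF that(3)] by simp
    then show "(1-2*w)*(r*T x) > Rc" using a by simp
  qed
  show ?thesis
    unfolding R00 R01
  proof (intro conjI impI)
    assume "r*tD < Rc" then show "\<forall>x\<in>{0<..<1}. \<forall>w\<in>{0<..<1}. deriv (\<lambda>v. g x v) w < 0"
      using partA by blast
  next
    assume h: "r * tC < Rc \<and> Rc < r * tD"
    then have "Rc > 0" using r0 assms(3) mult_nonneg_nonneg[of r tC] by linarith
    then show "\<forall>w\<in>{0<..<wD}. (\<forall>x\<in>{0<..<xt w}. deriv (\<lambda>v. g x v) w > 0) \<and>
          (\<forall>x\<in>{xt w<..<1}. deriv (\<lambda>v. g x v) w < 0)"
      and "\<forall>w\<in>{wD<..<1}. \<forall>x\<in>{0<..<1}. deriv (\<lambda>v. g x v) w < 0"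
      using midD aboveD by auto
  next
    assume h: "Rc < r * tC"
    then have tC0: "tC > 0" using r0 Rc0 mult_nonneg_nonpos[of r tC] by (cases "tC > 0") auto
    show "\<forall>w\<in>{0<..<wC}. \<forall>x\<in>{0<..<1}. deriv (\<lambda>v. g x v) w > 0"
      using belowC tC0 h by auto
    show "\<forall>w\<in>{wC<..<wD}. (\<forall>x\<in>{0<..<xt w}. deriv (\<lambda>v. g x v) w > 0) \<and>
          (\<forall>x\<in>{xt w<..<1}. deriv (\<lambda>v. g x v) w < 0)"
      using midD by auto
    have "Rc > 0 \<or> w > 1/2" if "w > wD" for w
      using that wD r0 tD0 Rc0 by (cases "Rc > 0") auto
    then show "\<forall>w\<in>{wD<..<1}. \<forall>x\<in>{0<..<1}. deriv (\<lambda>v. g x v) w < 0"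
      using aboveD by auto
  qed
qed

end
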